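(* Let $G$ be a connected graph and let $e_i$ be an edge of $G$ with end points $p_i,q_i$. For any $s,t\in V(G)$, $$t(G)\,t(\overline{G}_{i,st})=t(G_{st})\,t(\overline{G}_i)-\frac14\big[t(G_{p_is})-t(G_{q_is})-t(G_{p_it})+t(G_{q_it})\big]^2.$$
   Context: Graphs are finite and may have multiple edges and loops; $t(H)$ is the number of spanning trees of $H$; a one-vertex graph has $t=1$. For vertices $x,y$ of $H$, $H_{xy}$ is obtained by identifying $x$ and $y$, with the convention $t(H_{xx}):=0$. $\overline{G}_i$ is the graph obtained by contracting $e_i$, which for counting spanning trees is $G_{p_iq_i}$, and $\overline{G}_{i,st}$ is obtained from $\overline{G}_i$ by identifying $s$ and $t$ (i.e. $G_{p_iq_i,st}$). *)

theory Defs
  imports Complex_Main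
begin

text \<open>A finite multigraph (multiple edges and loops allowed) is given by a vertex set V,
an edge set E (edge identifiers) and an endpoint map ends :: 'e => 'v * 'v.\<close>

definition mgraph :: "'v set \<Rightarrow> 'e set \<Rightarrow> ('e \<Rightarrow> 'v \<times> 'v) \<Rightarrow> bool" where
  "mgraph V E ends \<longleftrightarrow> finite V \<and> finite E \<and>
     (\<forall>e\<in>E. fst (ends e) \<in> V \<and> snd (ends e) \<in> V)"

definition adj_rel :: "'e set \<Rightarrow> ('e \<Rightarrow> 'v \<times> 'v) \<Rightarrow> ('v \<times> 'v) set" where
  "adj_rel F ends = {(u, v). \<exists>e\<in>F. ends e = (u, v) \<or> ends e = (v, u)}"

definition connected_by :: "'v set \<Rightarrow> 'e set \<Rightarrow> ('e \<Rightarrow> 'v \<times> 'v) \<Rightarrow> bool" where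
  "connected_by V F ends \<longleftrightarrow> (\<forall>u\<in>V. \<forall>v\<in>V. (u, v) \<in> (adj_rel F ends)\<^sup>*)"

definition mconnected :: "'v set \<Rightarrow> 'e set \<Rightarrow> ('e \<Rightarrow> 'v \<times> 'v) \<Rightarrow> bool" where
  "mconnected V E ends \<longleftrightarrow> V \<noteq> {} \<and> connected_by V E ends"

text \<open>Spanning trees: edge subsets with |V|-1 edges connecting all vertices
(equivalently, acyclic and connected). A one-vertex graph has exactly one (empty) spanning tree.\<close>

definition spanning_trees :: "'v set \<Rightarrow> 'e set \<Rightarrow> ('e \<Rightarrow> 'v \<times> 'v) \<Rightarrow> 'e set set" where
  "spanning_trees V E ends = {T. T \<subseteq> E \<and> card T = card V - 1 \<and> connected_by V T ends}"

definition ntrees :: "'v set \<Rightarrow> 'e set \<Rightarrow> ('e \<Rightarrow> 'v \<times> 'v) \<Rightarrow> nat" where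
  "ntrees V E ends = card (spanning_trees V E ends)"

definition ren :: "'v \<Rightarrow> 'v \<Rightarrow> 'v \<Rightarrow> 'v" where
  "ren x y v = (if v = y then x else v)"

definition ident_ends :: "('e \<Rightarrow> 'v \<times> 'v) \<Rightarrow> 'v \<Rightarrow> 'v \<Rightarrow> 'e \<Rightarrow> 'v \<times> 'v" where
  "ident_ends ends x y e = (ren x y (fst (ends e)), ren x y (snd (ends e)))"

text \<open>t(H_xy), with the convention t(H_xx) = 0.\<close>

definition ntrees_id :: "'v set \<Rightarrow> 'e set \<Rightarrow> ('e \<Rightarrow> 'v \<times> 'v) \<Rightarrow> 'v \<Rightarrow> 'v \<Rightarrow> nat" where
  "ntrees_id V E ends x y =
     (if x = y then 0 else ntrees (V - {y}) E (ident_ends ends x y))"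

text \<open>t(H_{pq,st}): identify p and q, then the images of s and t; the convention
t(H_xx)=0 applies at each identification step.\<close>

definition ntrees_id2 :: "'v set \<Rightarrow> 'e set \<Rightarrow> ('e \<Rightarrow> 'v \<times> 'v) \<Rightarrow> 'v \<Rightarrow> 'v \<Rightarrow> 'v \<Rightarrow> 'v \<Rightarrow> nat" where
  "ntrees_id2 V E ends p q s t =
     (if p = q then 0
      else ntrees_id (V - {q}) E (ident_ends ends p q) (ren p q s) (ren p q t))"

end

theory Submission
  imports Defs "Jordan_Normal_Form.Determinant"
begin

lemma adj_rel_sym: "(u,v) \<in> adj_rel F ends \<Longrightarrow> (v,u) \<in> adj_rel F ends"
  unfolding adj_rel_def by auto

lemma adj_rel_mono: "F \<subseteq> G \<Longrightarrow> adj_rel F ends \<subseteq> adj_rel G ends"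
  unfolding adj_rel_def by auto

lemma loop_rtrancl:
  assumes "f \<in> T" "ends f = (c, c)"
  shows "(adj_rel T ends)\<^sup>* = (adj_rel (T - {f}) ends)\<^sup>*"
proof -
  have "adj_rel T ends = adj_rel (T - {f}) ends \<union> {(c,c)}"
    using assms unfolding adj_rel_def by auto
  moreover have "(adj_rel (T - {f}) ends \<union> {(c,c)})\<^sup>* = (adj_rel (T - {f}) ends)\<^sup>*"
    by (rule rtrancl_subset) auto
  ultimately show ?thesis by simp
qed

lemma conn_ren_fwd:
  assumes "(u,v) \<in> (adj_rel T ends)\<^sup>*"
  shows "(ren a b u, ren a b v) \<in> (adj_rel T (ident_ends ends a b))\<^sup>*"
  using assms
proof (induction rule: rtrancl_induct)
  case base then show ?case by simp
next
  case (step y z)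
  then obtain f where f: "f \<in> T" "ends f = (y,z) \<or> ends f = (z,y)"
    unfolding adj_rel_def by auto
  then have "(ren a b y, ren a b z) \<in> adj_rel T (ident_ends ends a b)"
    unfolding adj_rel_def ident_ends_def by force
  with step show ?case by (meson rtrancl.rtrancl_into_rtrancl)
qed

lemma conn_ren_bwd:
  assumes e: "e \<in> T" "ends e = (a,b) \<or> ends e = (b,a)"
    and uv: "(x,y) \<in> (adj_rel T (ident_ends ends a b))\<^sup>*"
  shows "(x,y) \<in> (adj_rel T ends)\<^sup>*"
proof -
  have ab: "(a,b) \<in> adj_rel T ends" "(b,a) \<in> adj_rel T ends"
    using e unfolding adj_rel_def by auto
  have rz: "(z, ren a b z) \<in> (adj_rel T ends)\<^sup>* \<and> (ren a b z, z) \<in> (adj_rel T ends)\<^sup>*" for z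
    using ab unfolding ren_def by auto
  from uv show ?thesis
  proof (induction rule: rtrancl_induct)
    case base then show ?case by simp
  next
    case (step y z)
    then obtain f where f: "f \<in> T" "ident_ends ends a b f = (y,z) \<or> ident_ends ends a b f = (z,y)"
      unfolding adj_rel_def by auto
    obtain c d where cd: "ends f = (c,d)" by fastforce
    have "(c,d) \<in> adj_rel T ends" "(d,c) \<in> adj_rel T ends" using f cd unfolding adj_rel_def by auto
    moreover have "(y = ren a b c \<and> z = ren a b d) \<or> (z = ren a b c \<and> y = ren a b d)"
      using f cd unfolding ident_ends_def by auto
    ultimately have "(y,z) \<in> (adj_rel T ends)\<^sup>*"
      using rz by (meson r_into_rtrancl rtrancl_trans)
    with step show ?case by (meson rtrancl_trans)
  qed
qed

lemma conn_ren_iff: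
  assumes e: "e \<in> T" "ends e = (a,b) \<or> ends e = (b,a)"
  shows "(u,v) \<in> (adj_rel T ends)\<^sup>* \<longleftrightarrow> (ren a b u, ren a b v) \<in> (adj_rel T (ident_ends ends a b))\<^sup>*"
proof
  assume "(u,v) \<in> (adj_rel T ends)\<^sup>*" then show "(ren a b u, ren a b v) \<in> (adj_rel T (ident_ends ends a b))\<^sup>*"
    by (rule conn_ren_fwd)
next
  assume "(ren a b u, ren a b v) \<in> (adj_rel T (ident_ends ends a b))\<^sup>*"
  then have "(ren a b u, ren a b v) \<in> (adj_rel T ends)\<^sup>*" using conn_ren_bwd[of e T ends a b] e by blast
  moreover have ab: "(a,b) \<in> adj_rel T ends" "(b,a) \<in> adj_rel T ends"
    using e unfolding adj_rel_def by auto
  have rz: "(z, ren a b z) \<in> (adj_rel T ends)\<^sup>* \<and> (ren a b z, z) \<in> (adj_rel T ends)\<^sup>*" for z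
    using ab unfolding ren_def by auto
  ultimately show "(u,v) \<in> (adj_rel T ends)\<^sup>*"
    by (meson rtrancl_trans)
qed

lemma ident_loop: "ends e = (a,b) \<or> ends e = (b,a) \<Longrightarrow> ident_ends ends a b e = (a,a)"
  by (cases "ends e") (auto simp: ident_ends_def ren_def)

lemma contract_connected:
  assumes e: "e \<in> T" "ends e = (a,b) \<or> ends e = (b,a)" and a: "a \<in> V" and ab: "a \<noteq> b"
  shows "connected_by V T ends \<longleftrightarrow> connected_by (V - {b}) (T - {e}) (ident_ends ends a b)"
proof -
  have L: "(adj_rel T (ident_ends ends a b))\<^sup>* = (adj_rel (T - {e}) (ident_ends ends a b))\<^sup>*"
    using loop_rtrancl[of e T "ident_ends ends a b" a] ident_loop[of ends e a b] e by blast
  have r1: "u \<in> V - {b} \<Longrightarrow> ren a b u = u" for u unfolding ren_def by auto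
  have r2: "u \<in> V \<Longrightarrow> ren a b u \<in> V - {b}" for u using a ab unfolding ren_def by auto
  show ?thesis unfolding connected_by_def L[symmetric]
  proof (intro iffI ballI)
    fix u v assume "\<forall>u\<in>V. \<forall>v\<in>V. (u, v) \<in> (adj_rel T ends)\<^sup>*" "u \<in> V - {b}" "v \<in> V - {b}"
    then show "(u, v) \<in> (adj_rel T (ident_ends ends a b))\<^sup>*"
      using conn_ren_iff[of e T ends a b u v] e r1 by auto
  next
    fix u v assume "\<forall>u\<in>V - {b}. \<forall>v\<in>V - {b}. (u, v) \<in> (adj_rel T (ident_ends ends a b))\<^sup>*" "u \<in> V" "v \<in> V"
    then show "(u, v) \<in> (adj_rel T ends)\<^sup>*"
      using conn_ren_iff[of e T ends a b u v] e r2 by auto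
  qed
qed

lemma card_conn:
  assumes "finite F" "finite V" "connected_by V F ends"
  shows "card V \<le> card F + 1"
  using assms
proof (induction F arbitrary: V ends rule: finite_induct)
  case empty
  then have "\<forall>u\<in>V. \<forall>v\<in>V. u = v" unfolding connected_by_def adj_rel_def by auto
  then show ?case by (metis One_nat_def add_0 card.empty card_le_Suc0_iff_eq empty.prems(1) le_add1)
next
  case (insert e F)
  obtain a b where ab: "ends e = (a,b)" by fastforce
  show ?case
  proof (cases "a = b")
    case True
    then have "connected_by V F ends" using insert(5) loop_rtrancl[of e "insert e F" ends a] ab insert(2)
      unfolding connected_by_def by auto
    then show ?thesis using insert.IH[of V ends] insert.prems insert.hyps by simp
  next
    case False
    show ?thesis
    proof (cases "a \<in> V")
      case True
      have "connected_by (V - {b}) F (ident_ends ends a b)"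
        using contract_connected[of e "insert e F" ends a b V] insert ab True False by auto
      then have "card (V - {b}) \<le> card F + 1" using insert.IH[of "V - {b}" "ident_ends ends a b"] insert.prems by auto
      then show ?thesis using insert by (simp add: card_Diff_singleton_if split: if_splits)
    next
      case aV: False
      have "connected_by (V - {b}) F (ident_ends ends a b)"
      proof -
        have "connected_by V (insert e F) ends" by fact
        have "(u,v) \<in> (adj_rel (insert e F) (ident_ends ends a b))\<^sup>*" if "u \<in> V - {b}" "v \<in> V - {b}" for u v
        proof -
          have "(u,v) \<in> (adj_rel (insert e F) ends)\<^sup>*" using that \<open>connected_by V (insert e F) ends\<close>
            unfolding connected_by_def by auto
          from conn_ren_fwd[OF this, of a b] that show ?thesis by (simp add: ren_def)
        qed
        then have "\<forall>u\<in>V - {b}. \<forall>v\<in>V - {b}. (u,v) \<in> (adj_rel (insert e F) (ident_ends ends a b))\<^sup>*"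
          by blast
        then show ?thesis unfolding connected_by_def
          using loop_rtrancl[of e "insert e F" "ident_ends ends a b" a] ident_loop[of ends e a b] ab insert(2)
          by auto
      qed
      then have "card (V - {b}) \<le> card F + 1" using insert.IH[of "V - {b}" "ident_ends ends a b"] insert.prems by auto
      then show ?thesis using insert by (simp add: card_Diff_singleton_if split: if_splits)
    qed
  qed
qed


lemma finite_ST: "finite E \<Longrightarrow> finite (spanning_trees V E ends)"
  unfolding spanning_trees_def by (rule finite_subset[of _ "Pow E"]) auto

lemma loop_not_in_tree:
  assumes "finite V" "finite E" "T \<in> spanning_trees V E ends" "f \<in> T" "ends f = (c,c)"
  shows False
proof -
  have T: "T \<subseteq> E" "card T = card V - 1" "connected_by V T ends"
    using assms(3) unfolding spanning_trees_def by auto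
  have fT: "finite T" using T(1) assms(2) finite_subset by blast
  have "V \<noteq> {}" using T(2) fT assms(4) by (auto simp: card_gt_0_iff)
  have "connected_by V (T - {f}) ends"
    using T(3) loop_rtrancl[of f T ends c] assms(4,5) unfolding connected_by_def by auto
  then have "card V \<le> card (T - {f}) + 1" using card_conn fT assms(1) by blast
  moreover have "card (T - {f}) = card T - 1" using fT assms(4) by simp
  moreover have "card V > 0" using \<open>V \<noteq> {}\<close> assms(1) by (simp add: card_gt_0_iff)
  moreover have "card T > 0" using fT assms(4) by (auto simp: card_gt_0_iff)
  ultimately show False using T(2) by linarith
qed

lemma ntrees_loop:
  assumes "finite V" "finite E" "f \<in> E" "ends f = (c,c)"
  shows "ntrees V E ends = ntrees V (E - {f}) ends"
proof -
  have "spanning_trees V E ends = spanning_trees V (E - {f}) ends"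
  proof
    show "spanning_trees V E ends \<subseteq> spanning_trees V (E - {f}) ends"
      using loop_not_in_tree[of V E _ ends f c] assms unfolding spanning_trees_def by blast
    show "spanning_trees V (E - {f}) ends \<subseteq> spanning_trees V E ends"
      unfolding spanning_trees_def by auto
  qed
  then show ?thesis unfolding ntrees_def by simp
qed

lemma ntrees_delcon:
  assumes V: "finite V" and E: "finite E" and e: "e \<in> E" "ends e = (a,b) \<or> ends e = (b,a)"
    and ab: "a \<in> V" "b \<in> V" "a \<noteq> b"
  shows "ntrees V E ends = ntrees V (E - {e}) ends + ntrees (V - {b}) E (ident_ends ends a b)"
proof -
  let ?S = "spanning_trees V E ends"
  let ?S1 = "spanning_trees V (E - {e}) ends"
  let ?S2 = "spanning_trees (V - {b}) E (ident_ends ends a b)"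
  have "card {a,b} \<le> card V" using ab V by (intro card_mono) auto
  then have cV: "card (V - {b}) = card V - 1" "card V \<ge> 2"
    using ab V by (auto simp: card_Diff_singleton_if)
  have split: "?S = ?S1 \<union> {T \<in> ?S. e \<in> T}" unfolding spanning_trees_def by auto
  have disj: "?S1 \<inter> {T \<in> ?S. e \<in> T} = {}" unfolding spanning_trees_def by auto
  have eS2: "e \<notin> T" if "T \<in> ?S2" for T
    using loop_not_in_tree[of "V - {b}" E T "ident_ends ends a b" e a] that V E ident_loop[of ends e a b] e
    by auto
  have img: "{T \<in> ?S. e \<in> T} = insert e ` ?S2"
  proof
    show "{T \<in> ?S. e \<in> T} \<subseteq> insert e ` ?S2"
    proof
      fix T assume T: "T \<in> {T \<in> ?S. e \<in> T}"
      then have T1: "T \<subseteq> E" "card T = card V - 1" "connected_by V T ends" "e \<in> T"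
        unfolding spanning_trees_def by auto
      have fT: "finite T" using T1(1) E finite_subset by blast
      have "T - {e} \<in> ?S2"
        unfolding spanning_trees_def
        using T1 fT cV contract_connected[of e T ends a b V] e ab by auto
      moreover have "T = insert e (T - {e})" using T1(4) by auto
      ultimately show "T \<in> insert e ` ?S2" by blast
    qed
  next
    show "insert e ` ?S2 \<subseteq> {T \<in> ?S. e \<in> T}"
    proof
      fix T assume "T \<in> insert e ` ?S2"
      then obtain T' where T': "T' \<in> ?S2" "T = insert e T'" by auto
      have eT': "e \<notin> T'" using eS2 T'(1) by blast
      have T1: "T' \<subseteq> E" "card T' = card (V - {b}) - 1" "connected_by (V - {b}) T' (ident_ends ends a b)"
        using T'(1) unfolding spanning_trees_def by auto
      have fT: "finite T'" using T1(1) E finite_subset by blast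
      have "connected_by V T ends"
        using contract_connected[of e T ends a b V] T' eT' T1(3) e ab by auto
      moreover have "card T = card V - 1" using T' eT' fT T1(2) cV by auto
      ultimately show "T \<in> {T \<in> ?S. e \<in> T}" using T' T1 e unfolding spanning_trees_def by auto
    qed
  qed
  have inj: "inj_on (insert e) ?S2"
    unfolding inj_on_def using eS2 by (metis insert_ident)
  have "card ?S = card ?S1 + card {T \<in> ?S. e \<in> T}"
  proof -
    have f1: "finite ?S1" using finite_ST[of "E - {e}"] E by blast
    have f2: "finite {T \<in> ?S. e \<in> T}" using finite_ST[OF E, of V ends] by simp
    show ?thesis using card_Un_disjoint[OF f1 f2 disj] split by simp
  qed
  also have "card {T \<in> ?S. e \<in> T} = card ?S2" using img inj card_image by metis
  finally show ?thesis unfolding ntrees_def .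
qed

lemma ntrees_relabel:
  assumes "inj h"
  shows "ntrees V (h ` E) ends = ntrees V E (ends \<circ> h)"
proof -
  have adj: "adj_rel (h ` T) ends = adj_rel T (ends \<circ> h)" for T
    unfolding adj_rel_def by auto
  have cardh: "card (h ` T) = card T" for T using assms by (simp add: card_image inj_on_subset)
  have "spanning_trees V (h ` E) ends = (image h) ` spanning_trees V E (ends \<circ> h)"
  proof
    show "spanning_trees V (h ` E) ends \<subseteq> (image h) ` spanning_trees V E (ends \<circ> h)"
    proof
      fix T' assume T': "T' \<in> spanning_trees V (h ` E) ends"
      define T where "T = h -` T' \<inter> E"
      have eq: "T' = h ` T" using T' unfolding T_def spanning_trees_def by auto
      have "T \<in> spanning_trees V E (ends \<circ> h)"
        using T' unfolding spanning_trees_def connected_by_def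
        by (auto simp: adj[symmetric] cardh[of T, symmetric] eq[symmetric]) (auto simp: T_def)
      then show "T' \<in> (image h) ` spanning_trees V E (ends \<circ> h)" using eq by blast
    qed
  next
    show "(image h) ` spanning_trees V E (ends \<circ> h) \<subseteq> spanning_trees V (h ` E) ends"
      unfolding spanning_trees_def connected_by_def by (auto simp: adj cardh)
  qed
  moreover have "inj_on (image h) X" for X using assms by (simp add: inj_on_def inj_image_eq_iff)
  ultimately show ?thesis unfolding ntrees_def by (simp add: card_image)
qed

lemma mgraph_ident:
  assumes "mgraph V E ends" "a \<in> V" "a \<noteq> b"
  shows "mgraph (V - {b}) E (ident_ends ends a b)"
  using assms unfolding mgraph_def ident_ends_def ren_def by auto

lemma ntrees_pos:
  assumes "mgraph V E ends" "mconnected V E ends"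
  shows "ntrees V E ends > 0"
  using assms
proof (induction "card V" arbitrary: V ends rule: less_induct)
  case less
  have V: "finite V" "V \<noteq> {}" and E: "finite E" and con: "connected_by V E ends"
    using less.prems unfolding mgraph_def mconnected_def by auto
  show ?case
  proof (cases "\<exists>e\<in>E. fst (ends e) \<noteq> snd (ends e)")
    case True
    then obtain e where e0: "e \<in> E" "fst (ends e) \<noteq> snd (ends e)" by blast
    obtain a b where "ends e = (a,b)" by fastforce
    then have e: "e \<in> E" "ends e = (a,b)" "a \<noteq> b" using e0 by auto
    have "fst (ends e) \<in> V \<and> snd (ends e) \<in> V" using less.prems(1) e(1) unfolding mgraph_def by blast
    then have ab: "a \<in> V" "b \<in> V" using e(2) by auto
    have "connected_by (V - {b}) (E - {e}) (ident_ends ends a b)"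
      using contract_connected[of e E ends a b V] e ab con by auto
    moreover have "(adj_rel (E - {e}) (ident_ends ends a b))\<^sup>* \<subseteq> (adj_rel E (ident_ends ends a b))\<^sup>*"
      by (rule rtrancl_mono[OF adj_rel_mono]) auto
    ultimately have "connected_by (V - {b}) E (ident_ends ends a b)"
      unfolding connected_by_def by blast
    then have "mconnected (V - {b}) E (ident_ends ends a b)"
      unfolding mconnected_def using ab e by auto
    moreover have "mgraph (V - {b}) E (ident_ends ends a b)" by (rule mgraph_ident[OF less.prems(1) ab(1) e(3)])
    moreover have "card (V - {b}) < card V" using V ab by (meson card_Diff1_less)
    ultimately have "ntrees (V - {b}) E (ident_ends ends a b) > 0" using less.hyps by blast
    then show ?thesis using ntrees_delcon[of V E e ends a b] V E e ab by auto
  next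
    case False
    then have "adj_rel E ends \<subseteq> Id" unfolding adj_rel_def by force
    have "x = y" if "(x,y) \<in> (adj_rel E ends)\<^sup>*" for x y
      using that \<open>adj_rel E ends \<subseteq> Id\<close> by (induction rule: rtrancl_induct) auto
    then have "\<forall>u\<in>V. \<forall>v\<in>V. u = v" using con unfolding connected_by_def by blast
    then obtain r where r: "V = {r}" using V by blast
    have "{} \<in> spanning_trees V E ends"
      unfolding spanning_trees_def connected_by_def using r by auto
    then show ?thesis unfolding ntrees_def using finite_ST[OF E]
      by (metis card_gt_0_iff empty_iff)
  qed
qed

definition addE :: "'e set \<Rightarrow> 'e option set" where "addE E = insert None (Some ` E)"
definition adde :: "('e \<Rightarrow> 'v \<times> 'v) \<Rightarrow> 'v \<Rightarrow> 'v \<Rightarrow> 'e option \<Rightarrow> 'v \<times> 'v" where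
  "adde ends x y oe = (case oe of None \<Rightarrow> (x,y) | Some f \<Rightarrow> ends f)"

lemma adde_Some: "adde ends x y \<circ> Some = ends" unfolding adde_def by auto

lemma ident_adde: "ident_ends (adde ends x y) a b = adde (ident_ends ends a b) (ren a b x) (ren a b y)"
  unfolding adde_def ident_ends_def by (auto split: option.splits)

lemma mgraph_add: "mgraph V E ends \<Longrightarrow> x \<in> V \<Longrightarrow> y \<in> V \<Longrightarrow> mgraph V (addE E) (adde ends x y)"
  unfolding mgraph_def addE_def adde_def by auto

lemma addE_minus: "addE E - {None} = Some ` E" unfolding addE_def by auto

lemma ntrees_add:
  assumes G: "mgraph V E ends" and xy: "x \<in> V" "y \<in> V"
  shows "ntrees V (addE E) (adde ends x y) = ntrees V E ends + ntrees_id V E ends x y"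
proof -
  have V: "finite V" and E: "finite E" using G unfolding mgraph_def by auto
  have E': "finite (addE E)" using E unfolding addE_def by auto
  have N: "None \<in> addE E" unfolding addE_def by auto
  have rel: "ntrees V' (Some ` E) (adde ends' x' y') = ntrees V' E ends'" for V' ends' x' y'
    using ntrees_relabel[of Some V' E "adde ends' x' y'"] adde_Some[of ends' x' y'] by simp
  show ?thesis
  proof (cases "x = y")
    case True
    have "ntrees V (addE E) (adde ends x y) = ntrees V (addE E - {None}) (adde ends x y)"
      using ntrees_loop[OF V E' N, of "adde ends x y" x] True by (simp add: adde_def)
    also have "\<dots> = ntrees V E ends" using rel by (simp add: addE_minus)
    finally show ?thesis using True by (simp add: ntrees_id_def)
  next
    case False
    have "ntrees V (addE E) (adde ends x y) = ntrees V (addE E - {None}) (adde ends x y)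
        + ntrees (V - {y}) (addE E) (ident_ends (adde ends x y) x y)"
      using ntrees_delcon[OF V E' N, of "adde ends x y" x y] xy False by (simp add: adde_def)
    also have "ntrees V (addE E - {None}) (adde ends x y) = ntrees V E ends"
      using rel by (simp add: addE_minus)
    also have "ntrees (V - {y}) (addE E) (ident_ends (adde ends x y) x y)
        = ntrees (V - {y}) (addE E - {None}) (ident_ends (adde ends x y) x y)"
      using ntrees_loop[of "V - {y}" "addE E" None "ident_ends (adde ends x y) x y" x] V E' N False
      by (simp add: ident_ends_def adde_def ren_def)
    also have "\<dots> = ntrees (V - {y}) E (ident_ends ends x y)"
      unfolding ident_adde addE_minus rel ..
    finally show ?thesis using False by (simp add: ntrees_id_def)
  qed
qed

lemma sylvester_det:
  fixes A :: "'a :: idom mat"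
  assumes A: "A \<in> carrier_mat n k" and B: "B \<in> carrier_mat k n"
  shows "det (1\<^sub>m n + A * B) = det (1\<^sub>m k + B * A)"
proof -
  have AB: "A * B \<in> carrier_mat n n" and BA: "B * A \<in> carrier_mat k k" using A B by auto
  define P where "P = four_block_mat (1\<^sub>m n) (- A) B (1\<^sub>m k)"
  define L1 where "L1 = four_block_mat (1\<^sub>m n) (0\<^sub>m n k) B (1\<^sub>m k)"
  define U1 where "U1 = four_block_mat (1\<^sub>m n) (- A) (0\<^sub>m k n) (1\<^sub>m k + B * A)"
  define U2 where "U2 = four_block_mat (1\<^sub>m n + A * B) (- A) (0\<^sub>m k n) (1\<^sub>m k)"
  have mA: "- A \<in> carrier_mat n k" using A by auto
  have e1: "L1 * U1 = P"
  proof -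
    have "L1 * U1 = four_block_mat (1\<^sub>m n * 1\<^sub>m n + 0\<^sub>m n k * 0\<^sub>m k n) (1\<^sub>m n * - A + 0\<^sub>m n k * (1\<^sub>m k + B * A))
       (B * 1\<^sub>m n + 1\<^sub>m k * 0\<^sub>m k n) (B * - A + 1\<^sub>m k * (1\<^sub>m k + B * A))"
      unfolding L1_def U1_def
      by (rule mult_four_block_mat) (use A B mA BA in auto)
    also have "B * - A + 1\<^sub>m k * (1\<^sub>m k + B * A) = 1\<^sub>m k"
    proof -
      have "B * - A + 1\<^sub>m k * (1\<^sub>m k + B * A) = - (B * A) + (1\<^sub>m k + B * A)" using A B BA by simp
      also have "\<dots> = 1\<^sub>m k" using A B BA by (intro eq_matI) auto
      finally show ?thesis .
    qed
    finally show ?thesis unfolding P_def using A B by simp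
  qed
  have e2: "U2 * L1 = P"
  proof -
    have "U2 * L1 = four_block_mat ((1\<^sub>m n + A * B) * 1\<^sub>m n + - A * B) ((1\<^sub>m n + A * B) * 0\<^sub>m n k + - A * 1\<^sub>m k)
       (0\<^sub>m k n * 1\<^sub>m n + 1\<^sub>m k * B) (0\<^sub>m k n * 0\<^sub>m n k + 1\<^sub>m k * 1\<^sub>m k)"
      unfolding L1_def U2_def
      by (rule mult_four_block_mat) (use A B mA AB in auto)
    also have "(1\<^sub>m n + A * B) * 1\<^sub>m n + - A * B = 1\<^sub>m n"
    proof -
      have "(1\<^sub>m n + A * B) * 1\<^sub>m n = 1\<^sub>m n + A * B" using right_mult_one_mat[of "1\<^sub>m n + A * B" n n] AB by simp
      moreover have "- A * B = - (A * B)" using A B by simp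
      moreover have "1\<^sub>m n + A * B + - (A * B) = 1\<^sub>m n" using A B AB by (intro eq_matI) auto
      ultimately show ?thesis by simp
    qed
    finally show ?thesis unfolding P_def using A B AB by simp
  qed
  have dL1: "det L1 = 1" unfolding L1_def
    by (subst det_four_block_mat_upper_right_zero[of _ n _ k]) (use B in auto)
  have dU1: "det U1 = det (1\<^sub>m k + B * A)" unfolding U1_def
    by (subst det_four_block_mat_lower_left_zero[of _ n _ k]) (use mA BA in auto)
  have dU2: "det U2 = det (1\<^sub>m n + A * B)" unfolding U2_def
    by (subst det_four_block_mat_lower_left_zero[of _ n _ k]) (use mA AB in auto)
  have cL1: "L1 \<in> carrier_mat (n+k) (n+k)" unfolding L1_def using B by auto
  have cU1: "U1 \<in> carrier_mat (n+k) (n+k)" unfolding U1_def using BA by auto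
  have cU2: "U2 \<in> carrier_mat (n+k) (n+k)" unfolding U2_def using AB by auto
  have "det P = det (1\<^sub>m k + B * A)" using e1 det_mult[OF cL1 cU1] dL1 dU1 by simp
  moreover have "det P = det (1\<^sub>m n + A * B)" using e2 det_mult[OF cU2 cL1] dL1 dU2 by simp
  ultimately show ?thesis by simp
qed

lemma det2:
  assumes "A \<in> carrier_mat 2 2"
  shows "det A = A $$ (0,0) * A $$ (1,1) - A $$ (0,1) * A $$ (1,0)"
proof -
  have "det A = (\<Sum>j<2. A $$ (0,j) * cofactor A 0 j)"
    by (rule laplace_expansion_row[OF assms]) simp
  also have "\<dots> = A $$ (0,0) * cofactor A 0 0 + A $$ (0,1) * cofactor A 0 1"
    by (simp add: numeral_2_eq_2)
  also have "cofactor A 0 0 = A $$ (1,1)"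
    unfolding cofactor_def using assms
    by (subst det_single[of "mat_delete A 0 0"]) (auto simp: mat_delete_def)
  also have "cofactor A 0 1 = - A $$ (1,0)"
    unfolding cofactor_def using assms
    by (subst det_single[of "mat_delete A 0 1"]) (auto simp: mat_delete_def)
  finally show ?thesis by (simp add: algebra_simps)
qed


definition qf :: "real mat \<Rightarrow> (nat \<Rightarrow> real) \<Rightarrow> (nat \<Rightarrow> real) \<Rightarrow> real" where
  "qf N x y = (\<Sum>i<dim_row N. \<Sum>j<dim_row N. x i * N $$ (i,j) * y j)"

lemma inverse_sym:
  fixes M :: "real mat"
  assumes M: "M \<in> carrier_mat n n" and d: "det M \<noteq> 0" and sym: "\<And>i j. i<n \<Longrightarrow> j<n \<Longrightarrow> M $$ (i,j) = M $$ (j,i)"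
  defines "N \<equiv> (1 / det M) \<cdot>\<^sub>m adj_mat M"
  shows "N \<in> carrier_mat n n" "M * N = 1\<^sub>m n" "\<And>i j. i<n \<Longrightarrow> j<n \<Longrightarrow> N $$ (i,j) = N $$ (j,i)"
proof -
  note adj = adj_mat[OF M]
  show N: "N \<in> carrier_mat n n" unfolding N_def using adj by simp
  have "M * N = (1 / det M) \<cdot>\<^sub>m (M * adj_mat M)" unfolding N_def
    by (rule mult_smult_distrib[OF M adj(1)])
  also have "\<dots> = 1\<^sub>m n" using adj(2) d by (intro eq_matI) auto
  finally show MN: "M * N = 1\<^sub>m n" .
  have MT: "transpose_mat M = M" using M sym by (intro eq_matI) auto
  have "transpose_mat N * M = 1\<^sub>m n"
    using transpose_mult[OF M N] MN MT by simp
  then have "transpose_mat N = N"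
    using N M MN assoc_mult_mat[of "transpose_mat N" n n M n N n]
    by (metis left_mult_one_mat right_mult_one_mat transpose_carrier_mat)
  then show "\<And>i j. i<n \<Longrightarrow> j<n \<Longrightarrow> N $$ (i,j) = N $$ (j,i)"
    using N by (metis carrier_matD index_transpose_mat(1))
qed

lemma rank2_update:
  fixes M :: "real mat"
  assumes M: "M \<in> carrier_mat n n" and d: "det M \<noteq> 0" and sym: "\<And>i j. i<n \<Longrightarrow> j<n \<Longrightarrow> M $$ (i,j) = M $$ (j,i)"
  defines "N \<equiv> (1 / det M) \<cdot>\<^sub>m adj_mat M"
  shows "det (M + mat n n (\<lambda>(i,j). a i * a j + b i * b j))
       = det M * ((1 + qf N a a) * (1 + qf N b b) - qf N a b * qf N a b)"
proof -
  note inv = inverse_sym[OF M d sym, folded N_def]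
  have N: "N \<in> carrier_mat n n" by (rule inv(1))
  define X where "X = mat n 2 (\<lambda>(i,c). if c = 0 then a i else b i)"
  define Y where "Y = mat 2 n (\<lambda>(c,j). if c = 0 then a j else b j)"
  have X: "X \<in> carrier_mat n 2" and Y: "Y \<in> carrier_mat 2 n" unfolding X_def Y_def by auto
  have NX: "N * X \<in> carrier_mat n 2" using N X by auto
  have XY: "X * Y = mat n n (\<lambda>(i,j). a i * a j + b i * b j)"
    unfolding X_def Y_def by (intro eq_matI) (auto simp: scalar_prod_def numeral_2_eq_2 lessThan_Suc)
  have "M * (1\<^sub>m n + (N * X) * Y) = M * 1\<^sub>m n + M * ((N * X) * Y)"
    by (rule mult_add_distrib_mat) (use M N X Y in auto)
  also have "M * ((N * X) * Y) = ((M * N) * X) * Y"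
    using assoc_mult_mat[OF M N X] assoc_mult_mat[OF M NX Y] by simp
  also have "\<dots> = X * Y" using inv(2) X by simp
  finally have eq: "M + X * Y = M * (1\<^sub>m n + (N * X) * Y)" using M by simp
  have "det (M + X * Y) = det M * det (1\<^sub>m n + (N * X) * Y)"
    unfolding eq by (rule det_mult[OF M]) (use NX Y in auto)
  also have "det (1\<^sub>m n + (N * X) * Y) = det (1\<^sub>m 2 + Y * (N * X))"
    by (rule sylvester_det[OF NX Y])
  also have "\<dots> = (1 + qf N a a) * (1 + qf N b b) - qf N a b * qf N b a"
  proof -
    have ent: "(Y * (N * X)) $$ (c,e) = qf N (\<lambda>j. Y $$ (c,j)) (\<lambda>i. X $$ (i,e))" if "c < 2" "e < 2" for c e
    proof -
      have "(Y * (N * X)) $$ (c,e) = (\<Sum>j<n. Y $$ (c,j) * (\<Sum>i<n. N $$ (j,i) * X $$ (i,e)))"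
        using that N X Y by (simp add: scalar_prod_def atLeast0LessThan)
      also have "\<dots> = qf N (\<lambda>j. Y $$ (c,j)) (\<lambda>i. X $$ (i,e))"
        unfolding qf_def using N by (simp add: sum_distrib_left mult.assoc)
      finally show ?thesis .
    qed
    have qa: "qf N (\<lambda>j. Y $$ (0,j)) = qf N a" "qf N (\<lambda>j. Y $$ (1,j)) = qf N b"
      unfolding qf_def Y_def using N by (auto intro!: ext sum.cong)
    have qb: "qf N f (\<lambda>i. X $$ (i,0)) = qf N f a" "qf N f (\<lambda>i. X $$ (i,1)) = qf N f b" for f
      unfolding qf_def X_def using N by (auto intro!: sum.cong)
    have C2: "1\<^sub>m 2 + Y * (N * X) \<in> carrier_mat 2 2" using Y NX by auto
    have Z: "Y * (N * X) \<in> carrier_mat 2 2" using Y NX by auto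
    have ix: "(1\<^sub>m 2 + Y * (N * X)) $$ (i,j) = (if i = j then 1 else 0) + (Y * (N * X)) $$ (i,j)"
      if "i < 2" "j < 2" for i j using carrier_matD[OF Z] that by (simp add: index_add_mat)
    from det2[OF C2] show ?thesis
      using ix[of 0 0] ix[of 0 1] ix[of 1 0] ix[of 1 1]
        ent[of 0 0] ent[of 0 1] ent[of 1 0] ent[of 1 1] qa qb by simp
  qed
  also have "qf N b a = qf N a b"
  proof -
    have "qf N b a = (\<Sum>i<n. \<Sum>j<n. b i * N $$ (i,j) * a j)" unfolding qf_def using N by simp
    also have "\<dots> = (\<Sum>j<n. \<Sum>i<n. b i * N $$ (i,j) * a j)" by (rule sum.swap)
    also have "\<dots> = (\<Sum>j<n. \<Sum>i<n. a j * N $$ (j,i) * b i)"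
      using inv(3) by (intro sum.cong refl) (auto simp: mult.commute mult.left_commute)
    also have "\<dots> = qf N a b" unfolding qf_def using N by simp
    finally show ?thesis .
  qed
  finally show ?thesis unfolding XY .
qed

definition nloops :: "'e set \<Rightarrow> ('e \<Rightarrow> 'v \<times> 'v) \<Rightarrow> 'e set" where
  "nloops E ends = {f\<in>E. fst (ends f) \<noteq> snd (ends f)}"

definition incid :: "'e set \<Rightarrow> ('e \<Rightarrow> 'v \<times> 'v) \<Rightarrow> 'v \<Rightarrow> 'e set" where
  "incid E ends x = {f\<in>E. fst (ends f) \<noteq> snd (ends f) \<and> (fst (ends f) = x \<or> snd (ends f) = x)}"

definition betw :: "'e set \<Rightarrow> ('e \<Rightarrow> 'v \<times> 'v) \<Rightarrow> 'v \<Rightarrow> 'v \<Rightarrow> 'e set" where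
  "betw E ends x y = {f\<in>E. ends f = (x,y) \<or> ends f = (y,x)}"

definition lap :: "'e set \<Rightarrow> ('e \<Rightarrow> 'v \<times> 'v) \<Rightarrow> 'v \<Rightarrow> 'v \<Rightarrow> real" where
  "lap E ends x y = (if x = y then real (card (incid E ends x)) else - real (card (betw E ends x y)))"

definition lapmat :: "'e set \<Rightarrow> ('e \<Rightarrow> 'v \<times> 'v) \<Rightarrow> 'v list \<Rightarrow> real mat" where
  "lapmat E ends vs = mat (length vs) (length vs) (\<lambda>(i,j). lap E ends (vs ! i) (vs ! j))"

lemma lap_sym: "lap E ends x y = lap E ends y x"
  unfolding lap_def betw_def by (auto intro!: arg_cong[where f = card])

lemma det_diag_add:
  fixes A :: "'a :: comm_ring_1 mat"
  assumes A: "A \<in> carrier_mat n n" and k: "k < n"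
  shows "det (A + mat n n (\<lambda>(i,j). if i = k \<and> j = k then 1 else 0)) = det A + det (mat_delete A k k)"
proof -
  let ?B = "A + mat n n (\<lambda>(i,j). if i = k \<and> j = k then 1 else 0)"
  have B: "?B \<in> carrier_mat n n" using A by auto
  have md: "mat_delete ?B k j = mat_delete A k j" if "j < n" for j
    using A that unfolding mat_delete_def by (intro eq_matI) auto
  have "det ?B = (\<Sum>j<n. ?B $$ (k,j) * cofactor ?B k j)"
    by (rule laplace_expansion_row[OF B k])
  also have "\<dots> = (\<Sum>j<n. (A $$ (k,j) + (if j = k then 1 else 0)) * cofactor A k j)"
    using A k md by (intro sum.cong refl) (auto simp: cofactor_def)
  also have "\<dots> = (\<Sum>j<n. A $$ (k,j) * cofactor A k j) + (\<Sum>j<n. if j = k then cofactor A k j else 0)"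
    by (subst sum.distrib[symmetric]) (rule sum.cong, auto simp: distrib_right)
  also have "(\<Sum>j<n. if j = k then cofactor A k j else 0) = cofactor A k k"
    using k by simp
  also have "(\<Sum>j<n. A $$ (k,j) * cofactor A k j) = det A"
    by (rule laplace_expansion_row[OF A k, symmetric])
  finally show ?thesis by (simp add: cofactor_def)
qed

lemma det_rows_zero:
  fixes A :: "real mat"
  assumes A: "A \<in> carrier_mat n n" and n: "n > 0" and rows: "\<And>i. i < n \<Longrightarrow> (\<Sum>j<n. A $$ (i,j)) = 0"
  shows "det A = 0"
proof -
  let ?v = "vec n (\<lambda>_. 1 :: real)"
  have "?v \<noteq> 0\<^sub>v n" using n by (metis index_vec index_zero_vec(1) zero_neq_one)
  moreover have "A *\<^sub>v ?v = 0\<^sub>v n"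
    using A rows by (intro eq_vecI) (auto simp: scalar_prod_def atLeast0LessThan)
  ultimately have "\<exists>v. v \<in> carrier_vec n \<and> v \<noteq> 0\<^sub>v n \<and> A *\<^sub>v v = 0\<^sub>v n"
    by (intro exI[of _ ?v]) auto
  then show ?thesis using det_0_iff_vec_prod_zero[OF A] by simp
qed

lemma remove1_nth:
  assumes "distinct vs" "k < length vs" "vs ! k = b" "i < length vs - 1"
  shows "remove1 b vs ! i = vs ! (if i < k then i else Suc i)"
proof -
  have vs: "vs = take k vs @ b # drop (Suc k) vs" using assms by (metis id_take_nth_drop)
  have "b \<notin> set (take k vs)"
  proof
    assume "b \<in> set (take k vs)"
    then obtain j where j: "j < length (take k vs)" "take k vs ! j = b" by (auto simp: in_set_conv_nth)
    then have "j < k" "vs ! j = b" by auto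
    then show False using assms nth_eq_iff_index_eq[of vs j k] by auto
  qed
  then have r: "remove1 b vs = take k vs @ drop (Suc k) vs"
    using vs by (metis remove1.simps(2) remove1_append)
  show ?thesis unfolding r using assms by (auto simp: nth_append min_def)
qed


lemma sum_distinct_list:
  assumes "distinct vs"
  shows "(\<Sum>j<length vs. g (vs ! j)) = (\<Sum>y\<in>set vs. g y)"
  using sum.reindex_bij_betw[OF bij_betw_nth[OF assms refl refl], of g] by simp

lemma lap_del:
  assumes E: "finite E" and e: "e \<in> E" "ends e = (r,b) \<or> ends e = (b,r)" and rb: "r \<noteq> b"
    and xy: "x \<noteq> r" "y \<noteq> r"
  shows "lap E ends x y = lap (E - {e}) ends x y + (if x = b \<and> y = b then 1 else 0)"
proof (cases "x = y")
  case True
  show ?thesis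
  proof (cases "x = b")
    case xb: True
    have "incid E ends x = insert e (incid (E - {e}) ends x)" "e \<notin> incid (E - {e}) ends x"
      using e rb xb unfolding incid_def by auto
    moreover have "finite (incid (E - {e}) ends x)" using E unfolding incid_def by auto
    ultimately show ?thesis using True xb unfolding lap_def by simp
  next
    case False
    have "incid E ends x = incid (E - {e}) ends x"
      using e rb xy False unfolding incid_def by auto
    then show ?thesis using True False unfolding lap_def by simp
  qed
next
  case False
  have "betw E ends x y = betw (E - {e}) ends x y"
    using e xy unfolding betw_def by auto
  then show ?thesis using False unfolding lap_def by auto
qed

lemma aux_iff1:
  assumes "(u = x) = (c = x)" "(v = x) = (d = x)"
  shows "(u \<noteq> v \<and> (u = x \<or> v = x)) = (c \<noteq> d \<and> (c = x \<or> d = x))"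
  using assms by auto

lemma aux_iff2:
  assumes "(u = x) = (c = x)" "(v = x) = (d = x)" "(u = y) = (c = y)" "(v = y) = (d = y)"
  shows "((u,v) = (x,y) \<or> (u,v) = (y,x)) = ((c,d) = (x,y) \<or> (c,d) = (y,x))"
  using assms by auto

lemma lap_contract:
  assumes e: "ends e = (r,b) \<or> ends e = (b,r)" and rb: "r \<noteq> b"
    and xy: "x \<noteq> r" "x \<noteq> b" "y \<noteq> r" "y \<noteq> b"
  shows "lap (E - {e}) ends x y = lap E (ident_ends ends r b) x y"
proof -
  have rn: "ren r b z = x \<longleftrightarrow> z = x" "ren r b z = y \<longleftrightarrow> z = y" for z
    using xy unfolding ren_def by auto
  have "incid (E - {e}) ends x = incid E (ident_ends ends r b) x"
  proof -
    have "f \<in> incid (E - {e}) ends x \<longleftrightarrow> f \<in> incid E (ident_ends ends r b) x" for f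
    proof (cases "f = e")
      case True
      have "ident_ends ends r b e = (r,r)" using ident_loop[of ends e r b] e by blast
      then show ?thesis using True unfolding incid_def by auto
    next
      case False
      obtain c d where cd: "ends f = (c,d)" by fastforce
      have i: "ident_ends ends r b f = (ren r b c, ren r b d)" unfolding ident_ends_def cd by simp
      have "f \<in> incid (E - {e}) ends x \<longleftrightarrow> f \<in> E \<and> (c \<noteq> d \<and> (c = x \<or> d = x))"
        using False by (simp add: incid_def cd)
      moreover have "f \<in> incid E (ident_ends ends r b) x \<longleftrightarrow> f \<in> E \<and>
          (ren r b c \<noteq> ren r b d \<and> (ren r b c = x \<or> ren r b d = x))"
        by (simp add: incid_def i)
      ultimately show ?thesis using aux_iff1[OF rn(1)[of c] rn(1)[of d]] by simp
    qed
    then show ?thesis by blast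
  qed
  moreover have "betw (E - {e}) ends x y = betw E (ident_ends ends r b) x y"
  proof -
    have "f \<in> betw (E - {e}) ends x y \<longleftrightarrow> f \<in> betw E (ident_ends ends r b) x y" for f
    proof (cases "f = e")
      case True
      have "ident_ends ends r b e = (r,r)" using ident_loop[of ends e r b] e by blast
      then show ?thesis using True xy unfolding betw_def by auto
    next
      case False
      obtain c d where cd: "ends f = (c,d)" by fastforce
      have i: "ident_ends ends r b f = (ren r b c, ren r b d)" unfolding ident_ends_def cd by simp
      have "f \<in> betw (E - {e}) ends x y \<longleftrightarrow> f \<in> E \<and> ((c,d) = (x,y) \<or> (c,d) = (y,x))"
        using False by (simp add: betw_def cd)
      moreover have "f \<in> betw E (ident_ends ends r b) x y \<longleftrightarrow> f \<in> E \<and>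
          ((ren r b c, ren r b d) = (x,y) \<or> (ren r b c, ren r b d) = (y,x))"
        by (simp add: betw_def i)
      ultimately show ?thesis using aux_iff2[OF rn(1)[of c] rn(1)[of d] rn(2)[of c] rn(2)[of d]] by simp
    qed
    then show ?thesis by blast
  qed
  ultimately show ?thesis unfolding lap_def by (cases "x = y") auto
qed

lemma nloops_ident_subset:
  assumes "e \<in> E" "ends e = (r,b) \<or> ends e = (b,r)" "r \<noteq> b"
  shows "nloops E (ident_ends ends r b) \<subset> nloops E ends"
proof
  show "nloops E (ident_ends ends r b) \<subseteq> nloops E ends"
    unfolding nloops_def ident_ends_def by auto
  have "e \<in> nloops E ends" using assms unfolding nloops_def by auto
  moreover have "e \<notin> nloops E (ident_ends ends r b)"
    using ident_loop[of ends e r b] assms unfolding nloops_def by auto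
  ultimately show "nloops E (ident_ends ends r b) \<noteq> nloops E ends" by blast
qed

lemma ntrees_single:
  assumes "finite E"
  shows "ntrees {r} E ends = 1"
proof -
  have "spanning_trees {r} E ends = {{}}"
  proof
    show "spanning_trees {r} E ends \<subseteq> {{}}"
      unfolding spanning_trees_def using assms by (auto dest: finite_subset)
    show "{{}} \<subseteq> spanning_trees {r} E ends"
      unfolding spanning_trees_def connected_by_def by auto
  qed
  then show ?thesis unfolding ntrees_def by simp
qed

lemma ntrees_isolated:
  assumes r: "r \<in> V" and b: "b \<in> V" "b \<noteq> r"
    and iso: "\<And>e c. e \<in> E \<Longrightarrow> ends e = (r,c) \<or> ends e = (c,r) \<Longrightarrow> c = r"
  shows "ntrees V E ends = 0"
proof -
  have "spanning_trees V E ends = {}"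
  proof (rule ccontr)
    assume "spanning_trees V E ends \<noteq> {}"
    then obtain T where T: "T \<subseteq> E" "connected_by V T ends" unfolding spanning_trees_def by auto
    then have rb: "(r,b) \<in> (adj_rel T ends)\<^sup>*" using r b unfolding connected_by_def by auto
    have "z = r" if "(r,z) \<in> (adj_rel T ends)\<^sup>*" for z
      using that
    proof (induction rule: rtrancl_induct)
      case base then show ?case by simp
    next
      case (step y z)
      then obtain f where "f \<in> T" "ends f = (y,z) \<or> ends f = (z,y)" unfolding adj_rel_def by auto
      then show ?case using iso[of f z] step T(1) by auto
    qed
    then show False using rb b by auto
  qed
  then show ?thesis unfolding ntrees_def by simp
qed

lemma lapmat_carrier: "lapmat E ends vs \<in> carrier_mat (length vs) (length vs)"
  unfolding lapmat_def by simp

lemma incid_union: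
  assumes G: "mgraph V E ends" and x: "x \<in> V" "x \<noteq> r"
    and iso: "\<And>e c. e \<in> E \<Longrightarrow> ends e = (r,c) \<or> ends e = (c,r) \<Longrightarrow> c = r"
  shows "real (card (incid E ends x)) = (\<Sum>y\<in>V - {r} - {x}. real (card (betw E ends x y)))"
proof -
  have V: "finite V" and E: "finite E" using G unfolding mgraph_def by auto
  have eq: "incid E ends x = (\<Union>y\<in>V - {r} - {x}. betw E ends x y)"
  proof
    show "incid E ends x \<subseteq> (\<Union>y\<in>V - {r} - {x}. betw E ends x y)"
    proof
      fix f assume f: "f \<in> incid E ends x"
      obtain c d where cd: "ends f = (c,d)" by fastforce
      have fE: "f \<in> E" and cdn: "c \<noteq> d" "c = x \<or> d = x" using f cd unfolding incid_def by auto
      have cdV: "c \<in> V" "d \<in> V" using G fE cd unfolding mgraph_def by (metis fst_conv snd_conv)+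
      show "f \<in> (\<Union>y\<in>V - {r} - {x}. betw E ends x y)"
      proof (cases "c = x")
        case True
        then have "d \<noteq> r" using iso[of f x] fE cd x cdn by auto
        then show ?thesis using True cd cdV cdn fE unfolding betw_def by auto
      next
        case False
        then have "d = x" using cdn by auto
        then have "c \<noteq> r" using iso[of f x] fE cd x cdn by auto
        then show ?thesis using False \<open>d = x\<close> cd cdV cdn fE unfolding betw_def by auto
      qed
    qed
    show "(\<Union>y\<in>V - {r} - {x}. betw E ends x y) \<subseteq> incid E ends x"
      unfolding betw_def incid_def by auto
  qed
  have "card (incid E ends x) = (\<Sum>y\<in>V - {r} - {x}. card (betw E ends x y))"
    unfolding eq
    by (rule card_UN_disjoint) (use V E in \<open>auto simp: betw_def\<close>)
  then show ?thesis by simp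
qed

theorem matrix_tree:
  assumes "mgraph V E ends" "r \<in> V" "distinct vs" "set vs = V - {r}"
  shows "real (ntrees V E ends) = det (lapmat E ends vs)"
  using assms
proof (induction "card (nloops E ends)" arbitrary: V E ends vs rule: less_induct)
  case less
  have V: "finite V" and E: "finite E" using less.prems(1) unfolding mgraph_def by auto
  have G: "mgraph V E ends" by (rule less.prems(1))
  have r: "r \<in> V" and dvs: "distinct vs" and svs: "set vs = V - {r}" using less.prems by auto
  let ?n = "length vs"
  show ?case
  proof (cases "\<exists>e\<in>E. \<exists>b. b \<noteq> r \<and> (ends e = (r,b) \<or> ends e = (b,r))")
    case True
    then obtain e b where e: "e \<in> E" "ends e = (r,b) \<or> ends e = (b,r)" and br: "b \<noteq> r" by blast
    have "fst (ends e) \<in> V \<and> snd (ends e) \<in> V" using G e(1) unfolding mgraph_def by blast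
    then have bV: "b \<in> V" using e(2) by auto
    then have "b \<in> set vs" using svs br by auto
    then obtain k where k: "k < ?n" "vs ! k = b" by (auto simp: in_set_conv_nth)
    have rb: "r \<noteq> b" using br by simp
    have comb: "ntrees V E ends = ntrees V (E - {e}) ends + ntrees (V - {b}) E (ident_ends ends r b)"
      using ntrees_delcon[of V E e ends r b] V E e r bV rb by blast
    have IH1: "real (ntrees V (E - {e}) ends) = det (lapmat (E - {e}) ends vs)"
    proof (rule less.hyps)
      have "nloops (E - {e}) ends = nloops E ends - {e}" unfolding nloops_def by auto
      moreover have "e \<in> nloops E ends" using e rb unfolding nloops_def by auto
      moreover have "finite (nloops E ends)" using E unfolding nloops_def by auto
      ultimately show "card (nloops (E - {e}) ends) < card (nloops E ends)"
        by (metis card_Diff1_less)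
      show "mgraph V (E - {e}) ends" using G unfolding mgraph_def by auto
    qed (use r dvs svs in auto)
    have IH2: "real (ntrees (V - {b}) E (ident_ends ends r b)) = det (lapmat E (ident_ends ends r b) (remove1 b vs))"
    proof (rule less.hyps)
      have "finite (nloops E ends)" using E unfolding nloops_def by auto
      then show "card (nloops E (ident_ends ends r b)) < card (nloops E ends)"
        using nloops_ident_subset[of e E ends r b, OF e rb] by (rule psubset_card_mono)
      show "mgraph (V - {b}) E (ident_ends ends r b)" by (rule mgraph_ident[OF G r rb])
      show "set (remove1 b vs) = V - {b} - {r}" using svs dvs by auto
    qed (use r rb dvs in auto)
    have M1: "lapmat E ends vs = lapmat (E - {e}) ends vs + mat ?n ?n (\<lambda>(i,j). if i = k \<and> j = k then 1 else 0)"
    proof (rule eq_matI)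
      fix i j assume ij: "i < dim_row (lapmat (E - {e}) ends vs + mat ?n ?n (\<lambda>(i,j). if i = k \<and> j = k then 1 else 0))"
        "j < dim_col (lapmat (E - {e}) ends vs + mat ?n ?n (\<lambda>(i,j). if i = k \<and> j = k then 1 else 0))"
      then have ij': "i < ?n" "j < ?n" unfolding lapmat_def by auto
      have nr: "vs ! i \<noteq> r" "vs ! j \<noteq> r" using ij' svs nth_mem by fastforce+
      have kk: "(vs ! i = b \<and> vs ! j = b) = (i = k \<and> j = k)"
        using ij' k dvs nth_eq_iff_index_eq by metis
      show "lapmat E ends vs $$ (i,j) = (lapmat (E - {e}) ends vs + mat ?n ?n (\<lambda>(i,j). if i = k \<and> j = k then 1 else 0)) $$ (i,j)"
        using lap_del[of E e ends r b, OF E e rb nr] ij' kk unfolding lapmat_def by simp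
    qed (auto simp: lapmat_def)
    have M2: "mat_delete (lapmat (E - {e}) ends vs) k k = lapmat E (ident_ends ends r b) (remove1 b vs)"
    proof (rule eq_matI)
      have len: "length (remove1 b vs) = ?n - 1" using \<open>b \<in> set vs\<close> by (simp add: length_remove1)
      show "dim_row (mat_delete (lapmat (E - {e}) ends vs) k k) = dim_row (lapmat E (ident_ends ends r b) (remove1 b vs))"
        "dim_col (mat_delete (lapmat (E - {e}) ends vs) k k) = dim_col (lapmat E (ident_ends ends r b) (remove1 b vs))"
        using len unfolding lapmat_def by auto
      fix i j assume ij: "i < dim_row (lapmat E (ident_ends ends r b) (remove1 b vs))"
        "j < dim_col (lapmat E (ident_ends ends r b) (remove1 b vs))"
      then have ij': "i < ?n - 1" "j < ?n - 1" using len unfolding lapmat_def by auto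
      define i' where "i' = (if i < k then i else Suc i)"
      define j' where "j' = (if j < k then j else Suc j)"
      have i'j': "i' < ?n" "j' < ?n" "i' \<noteq> k" "j' \<noteq> k" using ij' k unfolding i'_def j'_def by auto
      have rem: "remove1 b vs ! i = vs ! i'" "remove1 b vs ! j = vs ! j'"
        using remove1_nth[OF dvs k(1) k(2)] ij' unfolding i'_def j'_def by auto
      have nr: "vs ! i' \<noteq> r" "vs ! j' \<noteq> r" using i'j' svs nth_mem by fastforce+
      have nb: "vs ! i' \<noteq> b" "vs ! j' \<noteq> b" using i'j' k dvs nth_eq_iff_index_eq by metis+
      have "mat_delete (lapmat (E - {e}) ends vs) k k $$ (i,j) = lap (E - {e}) ends (vs ! i') (vs ! j')"
        unfolding mat_delete_def lapmat_def i'_def j'_def using ij' k by auto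
      also have "\<dots> = lap E (ident_ends ends r b) (vs ! i') (vs ! j')"
        by (rule lap_contract[of ends e r b, OF e(2) rb nr(1) nb(1) nr(2) nb(2)])
      also have "\<dots> = lapmat E (ident_ends ends r b) (remove1 b vs) $$ (i,j)"
        unfolding lapmat_def using ij' len rem by simp
      finally show "mat_delete (lapmat (E - {e}) ends vs) k k $$ (i,j) = lapmat E (ident_ends ends r b) (remove1 b vs) $$ (i,j)" .
    qed
    have "det (lapmat E ends vs) = det (lapmat (E - {e}) ends vs) + det (mat_delete (lapmat (E - {e}) ends vs) k k)"
      unfolding M1 by (rule det_diag_add[OF lapmat_carrier k(1)])
    then show ?thesis using comb IH1 IH2 M2 by simp
  next
    case False
    then have iso: "\<And>e c. e \<in> E \<Longrightarrow> ends e = (r,c) \<or> ends e = (c,r) \<Longrightarrow> c = r" by blast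
    show ?thesis
    proof (cases "V = {r}")
      case True
      then have "vs = []" using svs by auto
      then show ?thesis using True ntrees_single[OF E] unfolding lapmat_def by simp
    next
      case False
      then obtain b where b: "b \<in> V" "b \<noteq> r" using r by blast
      have "ntrees V E ends = 0" by (rule ntrees_isolated[OF r b iso])
      moreover have "det (lapmat E ends vs) = 0"
      proof (rule det_rows_zero[OF lapmat_carrier])
        show "0 < ?n" using b svs by (metis DiffI empty_iff length_greater_0_conv list.set(1) singletonD)
        fix i assume i: "i < ?n"
        define x where "x = vs ! i"
        have x: "x \<in> V" "x \<noteq> r" using i svs nth_mem unfolding x_def by fastforce+
        have "(\<Sum>j<?n. lapmat E ends vs $$ (i,j)) = (\<Sum>j<?n. lap E ends x (vs ! j))"
          unfolding lapmat_def x_def using i by simp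
        also have "\<dots> = (\<Sum>y\<in>V - {r}. lap E ends x y)"
          using sum_distinct_list[OF dvs, of "lap E ends x"] svs by simp
        also have "\<dots> = lap E ends x x + (\<Sum>y\<in>V - {r} - {x}. lap E ends x y)"
          using x V by (simp add: sum.remove)
        also have "(\<Sum>y\<in>V - {r} - {x}. lap E ends x y) = - (\<Sum>y\<in>V - {r} - {x}. real (card (betw E ends x y)))"
          unfolding lap_def sum_negf[symmetric] by (rule sum.cong) auto
        also have "lap E ends x x = (\<Sum>y\<in>V - {r} - {x}. real (card (betw E ends x y)))"
          unfolding lap_def using incid_union[OF G x iso] by simp
        finally show "(\<Sum>j<?n. lapmat E ends vs $$ (i,j)) = 0" by simp
      qed
      ultimately show ?thesis by simp
    qed
  qed
qed

lemma alg_final: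
  fixes T C Ast Apq Aps Aqs Apt Aqt :: real and g :: "'v \<Rightarrow> 'v \<Rightarrow> real"
  assumes gs: "\<And>x y. g x y = g y x"
    and h: "Ast = T * (g s s + g t t - 2 * g s t)" "Apq = T * (g p p + g q q - 2 * g p q)"
      "Aps = T * (g p p + g s s - 2 * g p s)" "Aqs = T * (g q q + g s s - 2 * g q s)"
      "Apt = T * (g p p + g t t - 2 * g p t)" "Aqt = T * (g q q + g t t - 2 * g q t)"
    and h2: "T + Ast + (Apq + C) = T * ((1 + (g s s + g t t - 2 * g s t)) * (1 + (g p p + g q q - 2 * g p q))
        - (g s p - g s q - g t p + g t q) * (g s p - g s q - g t p + g t q))"
  shows "T * C = Ast * Apq - 1/4 * (Aps - Aqs - Apt + Aqt)^2"
proof -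
  have c: "g s p - g s q - g t p + g t q = g p s - g q s - g p t + g q t" using gs by metis
  define c0 where "c0 = g p s - g q s - g p t + g q t"
  have C: "C = T * ((g s s + g t t - 2 * g s t) * (g p p + g q q - 2 * g p q)) - T * c0 * c0"
    using h2 h(1,2) unfolding c c0_def[symmetric] by (simp add: algebra_simps)
  have B: "Aps - Aqs - Apt + Aqt = - 2 * T * c0" using h(3-6) unfolding c0_def by (simp add: algebra_simps)
  show ?thesis unfolding C B h(1,2) by (simp add: algebra_simps power2_eq_square)
qed

lemma lap_add:
  assumes E: "finite E"
  shows "lap (addE E) (adde ends x y) u v = lap E ends u v +
    ((if u = x then 1 else 0) - (if u = y then 1 else 0)) * ((if v = x then 1 else 0) - (if v = y then 1 else 0))"
proof -
  have i: "incid (addE E) (adde ends x y) u = Some ` incid E ends u \<union> (if x \<noteq> y \<and> (x = u \<or> y = u) then {None} else {})"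
    unfolding incid_def addE_def adde_def by auto
  have b: "betw (addE E) (adde ends x y) u v = Some ` betw E ends u v \<union> (if (x,y) = (u,v) \<or> (x,y) = (v,u) then {None} else {})"
    unfolding betw_def addE_def adde_def by auto
  have fi: "finite (incid E ends u)" "finite (betw E ends u v)" using E unfolding incid_def betw_def by auto
  have ci: "card (incid (addE E) (adde ends x y) u) = card (incid E ends u) + (if x \<noteq> y \<and> (x = u \<or> y = u) then 1 else 0)"
    unfolding i using fi by (subst card_Un_disjoint) (auto simp: card_image)
  have cb: "card (betw (addE E) (adde ends x y) u v) = card (betw E ends u v) + (if (x,y) = (u,v) \<or> (x,y) = (v,u) then 1 else 0)"
    unfolding b using fi by (subst card_Un_disjoint) (auto simp: card_image)
  show ?thesis unfolding lap_def ci cb by auto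
qed

lemma qf_diff_left: "qf N (\<lambda>i. f i - h i) k = qf N f k - qf N h k"
  unfolding qf_def by (simp add: left_diff_distrib sum_subtractf)

lemma qf_diff_right: "qf N k (\<lambda>i. f i - h i) = qf N k f - qf N k h"
  unfolding qf_def by (simp add: right_diff_distrib sum_subtractf)

lemma qf_zero: "qf N f (\<lambda>_. 0) = 0" "qf N (\<lambda>_. 0) f = 0"
  unfolding qf_def by auto

lemma qf_sym:
  assumes "N \<in> carrier_mat n n" "\<And>i j. i<n \<Longrightarrow> j<n \<Longrightarrow> N $$ (i,j) = N $$ (j,i)"
  shows "qf N f h = qf N h f"
proof -
  have "qf N f h = (\<Sum>i<n. \<Sum>j<n. f i * N $$ (i,j) * h j)" unfolding qf_def using assms by simp
  also have "\<dots> = (\<Sum>j<n. \<Sum>i<n. f i * N $$ (i,j) * h j)" by (rule sum.swap)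
  also have "\<dots> = (\<Sum>j<n. \<Sum>i<n. h j * N $$ (j,i) * f i)"
    using assms(2) by (intro sum.cong refl) (auto simp: mult.commute mult.left_commute)
  also have "\<dots> = qf N h f" unfolding qf_def using assms by simp
  finally show ?thesis .
qed


theorem corollary5p2:
  fixes V :: "'v set" and E :: "'e set" and ends :: "'e \<Rightarrow> 'v \<times> 'v"
  assumes "mgraph V E ends" and "mconnected V E ends"
    and "ei \<in> E" and "ends ei = (p, q)"
    and "s \<in> V" and "t \<in> V"
  shows "real (ntrees V E ends) * real (ntrees_id2 V E ends p q s t)
       = real (ntrees_id V E ends s t) * real (ntrees_id V E ends p q)
         - 1/4 * (real (ntrees_id V E ends p s) - real (ntrees_id V E ends q s)
                  - real (ntrees_id V E ends p t) + real (ntrees_id V E ends q t))^2"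
proof (cases "p = q")
  case True
  then show ?thesis by (simp add: ntrees_id2_def ntrees_id_def)
next
  case pq: False
  have G: "mgraph V E ends" by fact
  have V: "finite V" and E: "finite E" using G unfolding mgraph_def by auto
  have "fst (ends ei) \<in> V \<and> snd (ends ei) \<in> V" using G assms(3) unfolding mgraph_def by blast
  then have pV: "p \<in> V" and qV: "q \<in> V" using assms(4) by auto
  have sV: "s \<in> V" and tV: "t \<in> V" by fact+
  obtain vs where dvs: "distinct vs" and svs: "set vs = V - {p}"
    using finite_distinct_list[of "V - {p}"] V by auto
  define n where "n = length vs"
  define M where "M = lapmat E ends vs"
  have Mc: "M \<in> carrier_mat n n" unfolding M_def n_def by (rule lapmat_carrier)
  have Msym: "\<And>i j. i<n \<Longrightarrow> j<n \<Longrightarrow> M $$ (i,j) = M $$ (j,i)"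
    unfolding M_def lapmat_def n_def using lap_sym by auto
  define T where "T = real (ntrees V E ends)"
  have TM: "T = det M" unfolding T_def M_def by (rule matrix_tree[OF G pV dvs svs])
  have Tpos: "T > 0" unfolding T_def using ntrees_pos[OF G assms(2)] by simp
  then have dM: "det M \<noteq> 0" using TM by simp
  define N where "N = (1 / det M) \<cdot>\<^sub>m adj_mat M"
  note inv = inverse_sym[OF Mc dM Msym, folded N_def]
  define ind where "ind = (\<lambda>x i. if vs ! i = x then 1 else (0::real))"
  define w where "w = (\<lambda>x y i. ind x i - ind y i)"
  define g where "g = (\<lambda>x y. qf N (ind x) (ind y))"
  have gs: "\<And>x y. g x y = g y x" unfolding g_def using qf_sym[OF inv(1) inv(3)] by blast
  have qww: "qf N (w a b) (w c d) = g a c - g a d - g b c + g b d" for a b c d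
    unfolding w_def g_def qf_diff_left qf_diff_right by simp
  have lapw: "lapmat (addE E) (adde ends x y) vs = M + mat n n (\<lambda>(i,j). w x y i * w x y j + 0 * 0)" for x y
    unfolding M_def lapmat_def n_def w_def ind_def
    by (intro eq_matI) (auto simp: lap_add[OF E])
  have one: "real (ntrees V (addE E) (adde ends x y)) = T * (1 + qf N (w x y) (w x y))"
    if "x \<in> V" "y \<in> V" for x y
  proof -
    have "real (ntrees V (addE E) (adde ends x y)) = det (lapmat (addE E) (adde ends x y) vs)"
      by (rule matrix_tree[OF mgraph_add[OF G that] pV dvs svs])
    also have "\<dots> = det M * ((1 + qf N (w x y) (w x y)) * (1 + qf N (\<lambda>_. 0) (\<lambda>_. 0))
        - qf N (w x y) (\<lambda>_. 0) * qf N (w x y) (\<lambda>_. 0))"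
      unfolding lapw N_def by (rule rank2_update[OF Mc dM Msym])
    finally show ?thesis using TM by (simp add: qf_zero)
  qed
  have A: "real (ntrees_id V E ends x y) = T * (g x x + g y y - 2 * g x y)" if "x \<in> V" "y \<in> V" for x y
  proof -
    have "real (ntrees V (addE E) (adde ends x y)) = T + real (ntrees_id V E ends x y)"
      using ntrees_add[OF G that] T_def by simp
    then show ?thesis using one[OF that] qww[of x y x y] gs[of y x] by (simp add: algebra_simps)
  qed
  define E1 where "E1 = addE E"
  define ends1 where "ends1 = adde ends s t"
  have G1: "mgraph V E1 ends1" unfolding E1_def ends1_def by (rule mgraph_add[OF G sV tV])
  have E1f: "finite E1" using E unfolding E1_def addE_def by auto
  have lap2: "lapmat (addE E1) (adde ends1 p q) vs = M + mat n n (\<lambda>(i,j). w s t i * w s t j + w p q i * w p q j)"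
    unfolding M_def lapmat_def n_def w_def ind_def E1_def ends1_def
    by (intro eq_matI) (auto simp: lap_add[OF E1f[unfolded E1_def]] lap_add[OF E] algebra_simps)
  have two: "real (ntrees V (addE E1) (adde ends1 p q))
      = T * ((1 + qf N (w s t) (w s t)) * (1 + qf N (w p q) (w p q)) - qf N (w s t) (w p q) * qf N (w s t) (w p q))"
  proof -
    have "real (ntrees V (addE E1) (adde ends1 p q)) = det (lapmat (addE E1) (adde ends1 p q) vs)"
      by (rule matrix_tree[OF mgraph_add[OF G1 pV qV] pV dvs svs])
    also have "\<dots> = det M * ((1 + qf N (w s t) (w s t)) * (1 + qf N (w p q) (w p q)) - qf N (w s t) (w p q) * qf N (w s t) (w p q))"
      unfolding lap2 N_def by (rule rank2_update[OF Mc dM Msym])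
    finally show ?thesis using TM by simp
  qed
  have comb2: "ntrees V (addE E1) (adde ends1 p q)
      = ntrees V E ends + ntrees_id V E ends s t + (ntrees_id V E ends p q + ntrees_id2 V E ends p q s t)"
  proof -
    have "ntrees V (addE E1) (adde ends1 p q) = ntrees V E1 ends1 + ntrees_id V E1 ends1 p q"
      by (rule ntrees_add[OF G1 pV qV])
    also have "ntrees V E1 ends1 = ntrees V E ends + ntrees_id V E ends s t"
      unfolding E1_def ends1_def by (rule ntrees_add[OF G sV tV])
    also have "ntrees_id V E1 ends1 p q = ntrees_id V E ends p q + ntrees_id2 V E ends p q s t"
    proof -
      have "ntrees_id V E1 ends1 p q = ntrees (V - {q}) (addE E) (adde (ident_ends ends p q) (ren p q s) (ren p q t))"
        unfolding ntrees_id_def E1_def ends1_def ident_adde using pq by simp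
      also have "\<dots> = ntrees (V - {q}) E (ident_ends ends p q) + ntrees_id (V - {q}) E (ident_ends ends p q) (ren p q s) (ren p q t)"
      proof (rule ntrees_add)
        show "mgraph (V - {q}) E (ident_ends ends p q)" by (rule mgraph_ident[OF G pV pq])
        show "ren p q s \<in> V - {q}" "ren p q t \<in> V - {q}" using sV tV pV pq unfolding ren_def by auto
      qed
      finally show ?thesis unfolding ntrees_id_def ntrees_id2_def using pq by simp
    qed
    finally show ?thesis by simp
  qed
  have h2: "T + real (ntrees_id V E ends s t) + (real (ntrees_id V E ends p q) + real (ntrees_id2 V E ends p q s t))
     = T * ((1 + (g s s + g t t - 2 * g s t)) * (1 + (g p p + g q q - 2 * g p q))
        - (g s p - g s q - g t p + g t q) * (g s p - g s q - g t p + g t q))"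
  proof -
    have "T + real (ntrees_id V E ends s t) + (real (ntrees_id V E ends p q) + real (ntrees_id2 V E ends p q s t))
        = real (ntrees V (addE E1) (adde ends1 p q))" unfolding comb2 T_def by simp
    also have "\<dots> = T * ((1 + qf N (w s t) (w s t)) * (1 + qf N (w p q) (w p q)) - qf N (w s t) (w p q) * qf N (w s t) (w p q))"
      by (rule two)
    finally show ?thesis unfolding qww using gs[of t s] gs[of q p] by (simp add: algebra_simps)
  qed
  show ?thesis
    using alg_final[of g, OF gs A[OF sV tV] A[OF pV qV] A[OF pV sV] A[OF qV sV] A[OF pV tV] A[OF qV tV] h2]
    unfolding T_def .
qed

end
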